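(* Let $(\mathcal X,\mathcal B,\pi)$ be a measure space with $\pi$ $\sigma$-finite, $r$ measurable, and $\{\varepsilon(x)\}$ an arbitrary real-valued random field. Assume: (a) $p_0$ (and a reference density $p_{\rm ref}$) in $\mathcal P_\pi$ satisfy $\int p|\log p|\,d\pi<\infty$; (b) $\mathbb E_{X\sim p}[e^{|r(X)+\varepsilon(X)|}]<\infty$ for all $p\in\mathcal P_\pi$; (c) $0<Q_*<\infty$, $Q\le Q_*$ everywhere; (d) $\int_Ap_0\,d\pi>0$ where $A=\{Q=Q_*\}$. Let $p_{t+1}(x)=p_t(x)Q(x)/\mathbb E_{X\sim p_t}Q(X)$. Then for all $t$, $$\mathbb E_{X\sim p_{t+1}}Q(X)\ge\mathbb E_{X\sim p_t}Q(X)+\frac{\operatorname{Var}_{X\sim p_t}(Q(X))}{\mathbb E_{X\sim p_t}Q(X)},$$ and $\lim_{t\to\infty}\mathbb E_{X\sim p_t}Q(X)=Q_*$.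
   Context: $\mathcal P_\pi$ = probability densities w.r.t. $\pi$. $Q(x):=e^{r(x)}\mathbb E[e^{\varepsilon(x)}]$ (conditional expectation over the noise independent of $X$), $Q_*:=\operatorname*{ess\,sup}_\pi Q$. *)

theory Defs
  imports "HOL-Probability.Probability"
begin

definition dens_set :: "'a measure \<Rightarrow> ('a \<Rightarrow> real) set" where
  "dens_set M = {p. p \<in> borel_measurable M \<and> (\<forall>x\<in>space M. 0 \<le> p x)
                    \<and> (\<integral>\<^sup>+ x. ennreal (p x) \<partial>M) = 1}"

text \<open>Q(x) = e^{r(x)} E[e^{eps(x)}], the expectation taken over the noise space N
  (extended-nonnegative-valued, so it is defined without integrability conditions).\<close>
definition Qfun :: "('a \<Rightarrow> real) \<Rightarrow> ('a \<Rightarrow> 'w \<Rightarrow> real) \<Rightarrow> 'w measure \<Rightarrow> 'a \<Rightarrow> ennreal" where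
  "Qfun r eps N x = ennreal (exp (r x)) * (\<integral>\<^sup>+ w. ennreal (exp (eps x w)) \<partial>N)"

definition Exp_dens :: "'a measure \<Rightarrow> ('a \<Rightarrow> real) \<Rightarrow> ('a \<Rightarrow> real) \<Rightarrow> real" where
  "Exp_dens M p f = (\<integral> x. p x * f x \<partial>M)"

definition Var_dens :: "'a measure \<Rightarrow> ('a \<Rightarrow> real) \<Rightarrow> ('a \<Rightarrow> real) \<Rightarrow> real" where
  "Var_dens M p f = (\<integral> x. p x * (f x - Exp_dens M p f)\<^sup>2 \<partial>M)"

primrec iter_dens :: "'a measure \<Rightarrow> ('a \<Rightarrow> real) \<Rightarrow> ('a \<Rightarrow> real) \<Rightarrow> nat \<Rightarrow> 'a \<Rightarrow> real" where
  "iter_dens M Q p0 0 = p0"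
| "iter_dens M Q p0 (Suc t) =
     (\<lambda>x. iter_dens M Q p0 t x * Q x / Exp_dens M (iter_dens M Q p0 t) Q)"

end

theory Submission
  imports Defs
begin

lemma core:
  fixes M :: "'a measure" and q p0 :: "'a \<Rightarrow> real" and A :: "'a set" and c :: real
  assumes qm: "q \<in> borel_measurable M" and q0: "\<forall>x\<in>space M. 0 \<le> q x \<and> q x \<le> c"
    and pm: "p0 \<in> borel_measurable M" and p0nn: "\<forall>x\<in>space M. 0 \<le> p0 x"
    and p1: "(\<integral>\<^sup>+x. ennreal (p0 x) \<partial>M) = 1"
    and Ameas: "A \<in> sets M" and qA: "\<forall>x\<in>A. q x = c" and c0: "0 < c"
    and Apos: "(\<integral>\<^sup>+x. ennreal (p0 x) * indicator A x \<partial>M) > 0"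
  shows "(\<forall>t. Exp_dens M (iter_dens M q p0 (Suc t)) q \<ge> Exp_dens M (iter_dens M q p0 t) q
            + Var_dens M (iter_dens M q p0 t) q / Exp_dens M (iter_dens M q p0 t) q)
         \<and> (\<lambda>t. Exp_dens M (iter_dens M q p0 t) q) \<longlonglongrightarrow> c"
proof -
  define m where "m t = (\<integral>x. p0 x * q x ^ t \<partial>M)" for t
  have intp: "integrable M p0"
    using pm p0nn p1 by (intro integrableI_nonneg) (auto intro: AE_I2)
  have intm: "integrable M (\<lambda>x. p0 x * q x ^ t)" for t
  proof (rule Bochner_Integration.integrable_bound[where f="\<lambda>x. c^t * p0 x"])
    show "integrable M (\<lambda>x. c^t * p0 x)" using intp by simp
    show "(\<lambda>x. p0 x * q x ^ t) \<in> borel_measurable M" using pm qm by measurable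
    show "AE x in M. norm (p0 x * q x ^ t) \<le> norm (c ^ t * p0 x)"
    proof (rule AE_I2)
      fix x assume x: "x \<in> space M"
      have "q x ^ t \<le> c ^ t" using q0 x by (auto intro: power_mono)
      then have "p0 x * q x ^ t \<le> c ^ t * p0 x" using p0nn x by (simp add: mult.commute mult_left_mono)
      moreover have "0 \<le> p0 x * q x ^ t" using p0nn q0 x by simp
      ultimately show "norm (p0 x * q x ^ t) \<le> norm (c ^ t * p0 x)" using c0 p0nn x by simp
    qed
  qed
  have intA: "integrable M (\<lambda>x. p0 x * indicator A x)"
    using integrable_real_mult_indicator[OF Ameas intp] .
  define a where "a = (\<integral>x. p0 x * indicator A x \<partial>M)"
  have "(\<integral>\<^sup>+x. ennreal (p0 x * indicator A x) \<partial>M) = ennreal a"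
    unfolding a_def using intA p0nn by (intro nn_integral_eq_integral) (auto intro: AE_I2)
  moreover have "(\<integral>\<^sup>+x. ennreal (p0 x * indicator A x) \<partial>M) = (\<integral>\<^sup>+x. ennreal (p0 x) * indicator A x \<partial>M)"
    by (intro nn_integral_cong) (auto simp: indicator_def)
  ultimately have a0: "0 < a" using Apos by (metis ennreal_less_zero_iff)
  have "ennreal (m 0) = 1"
    unfolding m_def using nn_integral_eq_integral[OF intp] p0nn p1 by (auto intro: AE_I2)
  then have m0: "m 0 = 1"
    by (metis ennreal_1 ennreal_eq_1 ennreal_le_1 eq_iff ennreal_ge_1)
  have mlow: "c ^ t * a \<le> m t" for t
  proof -
    have "c ^ t * a = (\<integral>x. c ^ t * (p0 x * indicator A x) \<partial>M)" unfolding a_def by simp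
    also have "\<dots> \<le> m t" unfolding m_def
    proof (rule integral_mono)
      show "integrable M (\<lambda>x. c ^ t * (p0 x * indicator A x))" using intA by simp
      show "integrable M (\<lambda>x. p0 x * q x ^ t)" by (rule intm)
      fix x assume x: "x \<in> space M"
      show "c ^ t * (p0 x * indicator A x) \<le> p0 x * q x ^ t"
        using qA p0nn q0 x by (cases "x \<in> A") auto
    qed
    finally show ?thesis .
  qed
  have mpos: "0 < m t" for t using mlow[of t] a0 c0 by (smt (verit) mult_pos_pos zero_less_power)
  have mup: "m (Suc t) \<le> c * m t" for t
  proof -
    have "m (Suc t) \<le> (\<integral>x. c * (p0 x * q x ^ t) \<partial>M)" unfolding m_def
    proof (rule integral_mono)
      show "integrable M (\<lambda>x. c * (p0 x * q x ^ t))" using intm by simp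
      show "integrable M (\<lambda>x. p0 x * q x ^ Suc t)" by (rule intm)
      fix x assume x: "x \<in> space M"
      have "0 \<le> p0 x * q x ^ t" using p0nn q0 x by simp
      then have "(p0 x * q x ^ t) * q x \<le> (p0 x * q x ^ t) * c" using q0 x by (intro mult_left_mono) auto
      then show "p0 x * q x ^ Suc t \<le> c * (p0 x * q x ^ t)" by (simp add: algebra_simps)
    qed
    also have "\<dots> = c * m t" unfolding m_def by simp
    finally show ?thesis .
  qed
  define E where "E t = m (Suc t) / m t" for t
  have Eeq: "Exp_dens M (\<lambda>x. p0 x * q x ^ t / m t) q = E t" for t
  proof -
    have "(\<lambda>x. p0 x * q x ^ t / m t * q x) = (\<lambda>x. p0 x * q x ^ Suc t / m t)"
      by (auto simp: algebra_simps)
    then show ?thesis unfolding Exp_dens_def E_def m_def by simp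
  qed
  have iter: "iter_dens M q p0 t = (\<lambda>x. p0 x * q x ^ t / m t)" for t
  proof (induction t)
    case 0 then show ?case using m0 by simp
  next
    case (Suc t)
    show ?case using mpos[of t] mpos[of "Suc t"]
      by (simp add: Suc Eeq E_def field_simps)
  qed
  define V where "V t = m (Suc (Suc t)) / m t - (E t)^2" for t
  have Veq: "Var_dens M (\<lambda>x. p0 x * q x ^ t / m t) q = V t" for t
  proof -
    have "(\<lambda>x. p0 x * q x ^ t / m t * (q x - E t)\<^sup>2) =
      (\<lambda>x. (1 / m t) * (p0 x * q x ^ Suc (Suc t)) - (2 * E t / m t) * (p0 x * q x ^ Suc t)
           + ((E t)^2 / m t) * (p0 x * q x ^ t))"
      using mpos[of t] by (intro ext) (simp add: field_simps power2_eq_square)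
    then have "Var_dens M (\<lambda>x. p0 x * q x ^ t / m t) q =
      (\<integral>x. (1 / m t) * (p0 x * q x ^ Suc (Suc t)) - (2 * E t / m t) * (p0 x * q x ^ Suc t)
           + ((E t)^2 / m t) * (p0 x * q x ^ t) \<partial>M)"
      unfolding Var_dens_def Eeq by (simp only:)
    also have "\<dots> = (1 / m t) * m (Suc (Suc t)) - (2 * E t / m t) * m (Suc t) + ((E t)^2 / m t) * m t"
    proof -
      have i: "integrable M (\<lambda>x. k * (p0 x * q x ^ n))" for k n using intm[of n] by simp
      show ?thesis
        by (simp only: Bochner_Integration.integral_add[OF Bochner_Integration.integrable_diff[OF i i] i] Bochner_Integration.integral_diff[OF i i]
             integral_mult_right_zero m_def)
    qed
    also have "\<dots> = V t" using mpos[of t] unfolding V_def E_def by (simp add: field_simps power2_eq_square)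
    finally show ?thesis .
  qed
  have Vnn: "0 \<le> V t" for t
  proof -
    have "0 \<le> Var_dens M (\<lambda>x. p0 x * q x ^ t / m t) q"
      unfolding Var_dens_def using p0nn q0 mpos[of t] by (intro Bochner_Integration.integral_nonneg) auto
    then show ?thesis using Veq by simp
  qed
  have Epos: "0 < E t" for t using mpos[of t] mpos[of "Suc t"] unfolding E_def by simp
  have Ele: "E t \<le> c" for t using mup[of t] mpos[of t] unfolding E_def by (simp add: divide_le_eq)
  have Erec: "E (Suc t) = E t + V t / E t" for t
    using mpos[of t] mpos[of "Suc t"] mpos[of "Suc (Suc t)"] unfolding V_def E_def
    by (simp add: field_simps power2_eq_square)
  have inc: "incseq E"
    by (rule incseq_SucI) (use Erec Vnn Epos in \<open>simp add: less_imp_le\<close>)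
  define L where "L = (SUP t. E t)"
  have bdd: "bdd_above (range E)" using Ele by (intro bdd_aboveI[where M=c]) auto
  have lim: "E \<longlonglongrightarrow> L" unfolding L_def by (rule LIMSEQ_incseq_SUP[OF bdd inc])
  have EL: "E t \<le> L" for t unfolding L_def using bdd by (intro cSUP_upper) auto
  have Lc: "L \<le> c" unfolding L_def using Ele by (intro cSUP_least) auto
  have L0: "0 < L" using EL[of 0] Epos[of 0] by simp
  have mL: "m t \<le> L ^ t" for t
  proof (induction t)
    case 0 then show ?case using m0 by simp
  next
    case (Suc t)
    have "m (Suc t) = E t * m t" using mpos[of t] unfolding E_def by simp
    also have "\<dots> \<le> L * L ^ t" using EL[of t] Suc mpos[of t] Epos[of t]
      by (intro mult_mono) auto
    finally show ?case by simp
  qed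
  have "L = c"
  proof (rule ccontr)
    assume "L \<noteq> c"
    then have "1 < c / L" using Lc L0 by simp
    then obtain n where n: "1 / a < (c / L) ^ n" using real_arch_pow by blast
    have "c ^ n * a \<le> L ^ n" using mlow[of n] mL[of n] by simp
    then have "(c / L) ^ n * a \<le> 1" using L0 by (simp add: power_divide field_simps)
    with n a0 show False by (simp add: field_simps)
  qed
  show ?thesis
    using lim Erec Vnn Epos unfolding iter Eeq Veq \<open>L = c\<close> by simp
qed

theorem lemma4:
  fixes M :: "'a measure" and N :: "'w measure"
    and r :: "'a \<Rightarrow> real" and eps :: "'a \<Rightarrow> 'w \<Rightarrow> real"
    and p0 pref :: "'a \<Rightarrow> real"
  assumes sf: "sigma_finite_measure M"
    and r_meas: "r \<in> borel_measurable M"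
    and N_prob: "prob_space N"
    and eps_meas: "(\<lambda>(x, w). eps x w) \<in> borel_measurable (M \<Otimes>\<^sub>M N)"
    and p0_dens: "p0 \<in> dens_set M" and pref_dens: "pref \<in> dens_set M"
    and p0_ent: "integrable M (\<lambda>x. p0 x * \<bar>ln (p0 x)\<bar>)"
    and pref_ent: "integrable M (\<lambda>x. pref x * \<bar>ln (pref x)\<bar>)"
    and mgf: "\<forall>p\<in>dens_set M.
               (\<integral>\<^sup>+ x. ennreal (p x) * (\<integral>\<^sup>+ w. ennreal (exp \<bar>r x + eps x w\<bar>) \<partial>N) \<partial>M) < \<infinity>"
    and Qstar_pos: "0 < esssup M (Qfun r eps N)"
    and Qstar_fin: "esssup M (Qfun r eps N) < \<infinity>"
    and Q_le: "\<forall>x\<in>space M. Qfun r eps N x \<le> esssup M (Qfun r eps N)"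
    and A_pos: "(\<integral>\<^sup>+ x. ennreal (p0 x) *
                   indicator {x\<in>space M. Qfun r eps N x = esssup M (Qfun r eps N)} x \<partial>M) > 0"
  shows "(\<forall>t. Exp_dens M (iter_dens M (\<lambda>x. enn2real (Qfun r eps N x)) p0 (Suc t))
                       (\<lambda>x. enn2real (Qfun r eps N x))
             \<ge> Exp_dens M (iter_dens M (\<lambda>x. enn2real (Qfun r eps N x)) p0 t)
                       (\<lambda>x. enn2real (Qfun r eps N x))
               + Var_dens M (iter_dens M (\<lambda>x. enn2real (Qfun r eps N x)) p0 t)
                       (\<lambda>x. enn2real (Qfun r eps N x))
                 / Exp_dens M (iter_dens M (\<lambda>x. enn2real (Qfun r eps N x)) p0 t)
                       (\<lambda>x. enn2real (Qfun r eps N x)))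
         \<and> (\<lambda>t. Exp_dens M (iter_dens M (\<lambda>x. enn2real (Qfun r eps N x)) p0 t)
                       (\<lambda>x. enn2real (Qfun r eps N x)))
           \<longlonglongrightarrow> enn2real (esssup M (Qfun r eps N))"
proof -
  interpret N: prob_space N by (rule N_prob)
  define Q where "Q = Qfun r eps N"
  define Qs where "Qs = esssup M Q"
  have e2: "(\<lambda>z. ennreal (exp (case z of (x, w) \<Rightarrow> eps x w))) \<in> borel_measurable (M \<Otimes>\<^sub>M N)"
    by (rule measurable_compose[OF eps_meas]) auto
  have e3: "case_prod (\<lambda>x w. ennreal (exp (eps x w))) \<in> borel_measurable (M \<Otimes>\<^sub>M N)"
    using e2 by (simp add: case_prod_beta')
  have nm: "(\<lambda>x. \<integral>\<^sup>+ w. ennreal (exp (eps x w)) \<partial>N) \<in> borel_measurable M"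
    by (rule N.borel_measurable_nn_integral[OF e3])
  have Qm: "Q \<in> borel_measurable M"
    unfolding Q_def Qfun_def using r_meas nm by measurable
  have Ameas: "{x\<in>space M. Q x = Qs} \<in> sets M"
    using Qm by measurable
  have Qsfin: "Qs < top" using Qstar_fin unfolding Qs_def Q_def by simp
  have c0: "0 < enn2real Qs" using Qstar_pos Qsfin unfolding Qs_def Q_def
    by (simp add: enn2real_positive_iff)
  have q0: "\<forall>x\<in>space M. 0 \<le> enn2real (Q x) \<and> enn2real (Q x) \<le> enn2real Qs"
    using Q_le Qsfin unfolding Qs_def Q_def by (auto intro: enn2real_mono)
  have qm: "(\<lambda>x. enn2real (Q x)) \<in> borel_measurable M" using Qm by measurable
  have pm: "p0 \<in> borel_measurable M" and p0nn: "\<forall>x\<in>space M. 0 \<le> p0 x"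
    and p1: "(\<integral>\<^sup>+x. ennreal (p0 x) \<partial>M) = 1"
    using p0_dens unfolding dens_set_def by auto
  have qA: "\<forall>x\<in>{x\<in>space M. Q x = Qs}. enn2real (Q x) = enn2real Qs" by simp
  show ?thesis
    using core[OF qm q0 pm p0nn p1 Ameas qA c0] A_pos unfolding Q_def Qs_def by simp
qed

end
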